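(* Let $(L,\rho,\tau)$ be a probabilistic metric space whose triangle function $\tau$ is sup-continuous and satisfies condition (W). Then the subfamily $P_{fb}(L)$ of nonempty closed bounded subsets and the subfamily $P_{ftb}(L)$ of nonempty closed totally bounded subsets are closed in $P_f(L)$ with respect to the probabilistic Pompeiu–Hausdorff metric $H$ (i.e. if $A_n\to A$ in $(P_f(L),H)$ with all $A_n$ in the subfamily, then $A$ is in the subfamily). Consequently, if $L$ is complete, then $P_{fb}(L)$ and the family $P_k(L)$ of nonempty compact subsets of $L$ are complete with respect to $H$.
   Context: $\Delta^+$ is the set of functions $F:[-\infty,\infty]\to[0,1]$ that are nondecreasing, left-continuous on $\mathbb R$, with $F(-\infty)=0$, $F(\infty)=1$ and $F(0)=0$; ordered pointwise. $\epsilon_0(x)=0$ for $x\le0$, $=1$ for $x>0$. Infimum of $\{F_i\}$ in $\Delta^+$: $G(x)=\sup_{x'<x}\inf_iF_i(x')$; supremum: pointwise. A triangle function is $\tau:\Delta^+\times\Delta^+\to\Delta^+$ commutative, associative, nondecreasing in each argument, with $\tau(F,\epsilon_0)=F$, continuous for weak convergence. A probabilistic metric space $(L,\rho,\tau)$: set $L$, continuous triangle function $\tau$, $\rho:L\times L\to\Delta^+$, $\rho(p,q)=F_{pq}$, with $F_{pp}=\epsilon_0$, $F_{pq}=\epsilon_0\Rightarrow p=q$, $F_{pq}=F_{qp}$, $F_{pr}\ge\tau(F_{pq},F_{qr})$. Strong topology: neighborhood base $U_t(p)=\{q:F_{pq}(t)>1-t\}$; it comes from the uniformity with vicinities $U_t=\{(p,q):F_{pq}(t)>1-t\}$,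 $t>0$; convergence, Cauchy sequences, completeness, compactness refer to it. A set $Y\subset L$ is totally bounded if for every $t>0$ there is a finite $Z\subset L$ with $Y\subset\bigcup_{z\in Z}U_t(z)$. A set $A$ is bounded if $\sup_{t>0}\Phi_A(t)=1$ where $\Phi_A(t)=\inf\{F_{pp'}(t):p,p'\in A\}$. $\tau$ is sup-continuous if $\tau(\sup_iF_i,G)=\sup_i\tau(F_i,G)$ for every family $\{F_i\}\subset\Delta^+$, $G\in\Delta^+$. Condition (W): for all $x>0$, $F,G\in\Delta^+$, $\alpha,\beta\in\mathbb R$, $F(x)>\alpha$ and $G(x)>\beta$ imply $\tau(F,G)(x)>\alpha+\beta-1$. For nonempty $A,B\subset L$: $F_{pB}(x)=\sup_{q\in B}F_{pq}(x)$, $\Gamma^*_{AB}(x)=\inf_{p\in A}F_{pB}(x)$, $F^*_{AB}(x)=\sup_{x'<x}\Gamma^*_{AB}(x')$, $H(A,B)=F_{AB}=\min\{F^*_{AB},F^*_{BA}\}$. $P_f(L)$ is the family of nonempty closed subsets; $A_n\to A$ in $(P_f(L),H)$ iff for every $t>0$, $F_{A_nA}(t)>1-t$ for all large $n$; Cauchy sequences for $H$ analogously. *)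

theory Defs
  imports Complex_Main
begin

text \<open>Distribution functions of Delta+ are represented by their restriction to the
real line (the values F(-inf)=0 and F(inf)=1 are fixed by convention).\<close>

definition delta_plus :: "(real \<Rightarrow> real) \<Rightarrow> bool" where
  "delta_plus F \<longleftrightarrow> mono F \<and> (\<forall>x. 0 \<le> F x \<and> F x \<le> 1) \<and> F 0 = 0
     \<and> (\<forall>x. (F \<longlongrightarrow> F x) (at_left x))"

definition eps0 :: "real \<Rightarrow> real" where
  "eps0 = (\<lambda>x. if x \<le> 0 then 0 else 1)"

definition weak_conv :: "(nat \<Rightarrow> real \<Rightarrow> real) \<Rightarrow> (real \<Rightarrow> real) \<Rightarrow> bool" where
  "weak_conv Fs F \<longleftrightarrow> (\<forall>x. isCont F x \<longrightarrow> (\<lambda>n. Fs n x) \<longlonglongrightarrow> F x)"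

definition triangle_function ::
  "((real \<Rightarrow> real) \<Rightarrow> (real \<Rightarrow> real) \<Rightarrow> (real \<Rightarrow> real)) \<Rightarrow> bool" where
  "triangle_function \<tau> \<longleftrightarrow>
     (\<forall>F G. delta_plus F \<and> delta_plus G \<longrightarrow> delta_plus (\<tau> F G)) \<and>
     (\<forall>F G. delta_plus F \<and> delta_plus G \<longrightarrow> \<tau> F G = \<tau> G F) \<and>
     (\<forall>F G K. delta_plus F \<and> delta_plus G \<and> delta_plus K \<longrightarrow> \<tau> F (\<tau> G K) = \<tau> (\<tau> F G) K) \<and>
     (\<forall>F F' G. delta_plus F \<and> delta_plus F' \<and> delta_plus G \<and> F \<le> F' \<longrightarrow> \<tau> F G \<le> \<tau> F' G) \<and>
     (\<forall>F. delta_plus F \<longrightarrow> \<tau> F eps0 = F) \<and>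
     (\<forall>Fs F Gs G. (\<forall>n. delta_plus (Fs n)) \<and> delta_plus F \<and> (\<forall>n. delta_plus (Gs n)) \<and> delta_plus G
        \<and> weak_conv Fs F \<and> weak_conv Gs G \<longrightarrow> weak_conv (\<lambda>n. \<tau> (Fs n) (Gs n)) (\<tau> F G))"

definition tf_sup_continuous ::
  "((real \<Rightarrow> real) \<Rightarrow> (real \<Rightarrow> real) \<Rightarrow> (real \<Rightarrow> real)) \<Rightarrow> bool" where
  "tf_sup_continuous \<tau> \<longleftrightarrow>
     (\<forall>S G. S \<noteq> {} \<and> (\<forall>F\<in>S. delta_plus F) \<and> delta_plus G \<longrightarrow>
        \<tau> (\<lambda>x. SUP F\<in>S. F x) G = (\<lambda>x. SUP F\<in>S. \<tau> F G x))"

definition condition_W ::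
  "((real \<Rightarrow> real) \<Rightarrow> (real \<Rightarrow> real) \<Rightarrow> (real \<Rightarrow> real)) \<Rightarrow> bool" where
  "condition_W \<tau> \<longleftrightarrow>
     (\<forall>x F G \<alpha> \<beta>. x > 0 \<and> delta_plus F \<and> delta_plus G \<and> F x > \<alpha> \<and> G x > \<beta>
        \<longrightarrow> \<tau> F G x > \<alpha> + \<beta> - 1)"

definition pm_space ::
  "('a \<Rightarrow> 'a \<Rightarrow> real \<Rightarrow> real) \<Rightarrow> ((real \<Rightarrow> real) \<Rightarrow> (real \<Rightarrow> real) \<Rightarrow> (real \<Rightarrow> real)) \<Rightarrow> bool" where
  "pm_space \<rho> \<tau> \<longleftrightarrow> triangle_function \<tau> \<and>
     (\<forall>p q. delta_plus (\<rho> p q)) \<and>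
     (\<forall>p. \<rho> p p = eps0) \<and>
     (\<forall>p q. \<rho> p q = eps0 \<longrightarrow> p = q) \<and>
     (\<forall>p q. \<rho> p q = \<rho> q p) \<and>
     (\<forall>p q r. \<tau> (\<rho> p q) (\<rho> q r) \<le> \<rho> p r)"

definition nbhd :: "('a \<Rightarrow> 'a \<Rightarrow> real \<Rightarrow> real) \<Rightarrow> real \<Rightarrow> 'a \<Rightarrow> 'a set" where
  "nbhd \<rho> t p = {q. \<rho> p q t > 1 - t}"

definition pm_open :: "('a \<Rightarrow> 'a \<Rightarrow> real \<Rightarrow> real) \<Rightarrow> 'a set \<Rightarrow> bool" where
  "pm_open \<rho> S \<longleftrightarrow> (\<forall>p\<in>S. \<exists>t>0. nbhd \<rho> t p \<subseteq> S)"

definition pm_closed :: "('a \<Rightarrow> 'a \<Rightarrow> real \<Rightarrow> real) \<Rightarrow> 'a set \<Rightarrow> bool" where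
  "pm_closed \<rho> A \<longleftrightarrow> pm_open \<rho> (- A)"

definition pm_compact :: "('a \<Rightarrow> 'a \<Rightarrow> real \<Rightarrow> real) \<Rightarrow> 'a set \<Rightarrow> bool" where
  "pm_compact \<rho> K \<longleftrightarrow> (\<forall>\<U>. (\<forall>U\<in>\<U>. pm_open \<rho> U) \<and> K \<subseteq> \<Union>\<U> \<longrightarrow>
      (\<exists>\<V>\<subseteq>\<U>. finite \<V> \<and> K \<subseteq> \<Union>\<V>))"

definition pm_converges :: "('a \<Rightarrow> 'a \<Rightarrow> real \<Rightarrow> real) \<Rightarrow> (nat \<Rightarrow> 'a) \<Rightarrow> 'a \<Rightarrow> bool" where
  "pm_converges \<rho> xs p \<longleftrightarrow> (\<forall>t>0. \<exists>N. \<forall>n\<ge>N. \<rho> p (xs n) t > 1 - t)"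

definition pm_cauchy :: "('a \<Rightarrow> 'a \<Rightarrow> real \<Rightarrow> real) \<Rightarrow> (nat \<Rightarrow> 'a) \<Rightarrow> bool" where
  "pm_cauchy \<rho> xs \<longleftrightarrow> (\<forall>t>0. \<exists>N. \<forall>m\<ge>N. \<forall>n\<ge>N. \<rho> (xs m) (xs n) t > 1 - t)"

definition pm_complete :: "('a \<Rightarrow> 'a \<Rightarrow> real \<Rightarrow> real) \<Rightarrow> bool" where
  "pm_complete \<rho> \<longleftrightarrow> (\<forall>xs. pm_cauchy \<rho> xs \<longrightarrow> (\<exists>p. pm_converges \<rho> xs p))"

definition pm_totally_bounded :: "('a \<Rightarrow> 'a \<Rightarrow> real \<Rightarrow> real) \<Rightarrow> 'a set \<Rightarrow> bool" where
  "pm_totally_bounded \<rho> Y \<longleftrightarrow> (\<forall>t>0. \<exists>Z. finite Z \<and> Y \<subseteq> (\<Union>z\<in>Z. nbhd \<rho> t z))"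

definition Phi :: "('a \<Rightarrow> 'a \<Rightarrow> real \<Rightarrow> real) \<Rightarrow> 'a set \<Rightarrow> real \<Rightarrow> real" where
  "Phi \<rho> A t = (INF pp'\<in>A \<times> A. \<rho> (fst pp') (snd pp') t)"

definition pm_bounded :: "('a \<Rightarrow> 'a \<Rightarrow> real \<Rightarrow> real) \<Rightarrow> 'a set \<Rightarrow> bool" where
  "pm_bounded \<rho> A \<longleftrightarrow> (SUP t\<in>{0<..}. Phi \<rho> A t) = 1"

definition F_pt_set :: "('a \<Rightarrow> 'a \<Rightarrow> real \<Rightarrow> real) \<Rightarrow> 'a \<Rightarrow> 'a set \<Rightarrow> real \<Rightarrow> real" where
  "F_pt_set \<rho> p B x = (SUP q\<in>B. \<rho> p q x)"

definition Gamma_star :: "('a \<Rightarrow> 'a \<Rightarrow> real \<Rightarrow> real) \<Rightarrow> 'a set \<Rightarrow> 'a set \<Rightarrow> real \<Rightarrow> real" where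
  "Gamma_star \<rho> A B x = (INF p\<in>A. F_pt_set \<rho> p B x)"

definition F_star :: "('a \<Rightarrow> 'a \<Rightarrow> real \<Rightarrow> real) \<Rightarrow> 'a set \<Rightarrow> 'a set \<Rightarrow> real \<Rightarrow> real" where
  "F_star \<rho> A B x = (SUP x'\<in>{..<x}. Gamma_star \<rho> A B x')"

definition pm_H :: "('a \<Rightarrow> 'a \<Rightarrow> real \<Rightarrow> real) \<Rightarrow> 'a set \<Rightarrow> 'a set \<Rightarrow> real \<Rightarrow> real" where
  "pm_H \<rho> A B x = min (F_star \<rho> A B x) (F_star \<rho> B A x)"

definition Pf :: "('a \<Rightarrow> 'a \<Rightarrow> real \<Rightarrow> real) \<Rightarrow> 'a set set" where
  "Pf \<rho> = {A. A \<noteq> {} \<and> pm_closed \<rho> A}"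

definition Pfb :: "('a \<Rightarrow> 'a \<Rightarrow> real \<Rightarrow> real) \<Rightarrow> 'a set set" where
  "Pfb \<rho> = {A. A \<noteq> {} \<and> pm_closed \<rho> A \<and> pm_bounded \<rho> A}"

definition Pftb :: "('a \<Rightarrow> 'a \<Rightarrow> real \<Rightarrow> real) \<Rightarrow> 'a set set" where
  "Pftb \<rho> = {A. A \<noteq> {} \<and> pm_closed \<rho> A \<and> pm_totally_bounded \<rho> A}"

definition Pk :: "('a \<Rightarrow> 'a \<Rightarrow> real \<Rightarrow> real) \<Rightarrow> 'a set set" where
  "Pk \<rho> = {A. A \<noteq> {} \<and> pm_compact \<rho> A}"

definition H_converges :: "('a \<Rightarrow> 'a \<Rightarrow> real \<Rightarrow> real) \<Rightarrow> (nat \<Rightarrow> 'a set) \<Rightarrow> 'a set \<Rightarrow> bool" where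
  "H_converges \<rho> As A \<longleftrightarrow> (\<forall>t>0. \<exists>N. \<forall>n\<ge>N. pm_H \<rho> (As n) A t > 1 - t)"

definition H_cauchy :: "('a \<Rightarrow> 'a \<Rightarrow> real \<Rightarrow> real) \<Rightarrow> (nat \<Rightarrow> 'a set) \<Rightarrow> bool" where
  "H_cauchy \<rho> As \<longleftrightarrow> (\<forall>t>0. \<exists>N. \<forall>m\<ge>N. \<forall>n\<ge>N. pm_H \<rho> (As m) (As n) t > 1 - t)"

definition H_closed_in_Pf :: "('a \<Rightarrow> 'a \<Rightarrow> real \<Rightarrow> real) \<Rightarrow> 'a set set \<Rightarrow> bool" where
  "H_closed_in_Pf \<rho> \<F> \<longleftrightarrow> (\<forall>As A. (\<forall>n. As n \<in> \<F>) \<and> A \<in> Pf \<rho> \<and> H_converges \<rho> As A \<longrightarrow> A \<in> \<F>)"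

definition H_complete :: "('a \<Rightarrow> 'a \<Rightarrow> real \<Rightarrow> real) \<Rightarrow> 'a set set \<Rightarrow> bool" where
  "H_complete \<rho> \<F> \<longleftrightarrow> (\<forall>As. (\<forall>n. As n \<in> \<F>) \<and> H_cauchy \<rho> As \<longrightarrow> (\<exists>A\<in>\<F>. H_converges \<rho> As A))"

end

theory Submission
  imports Defs "HOL-Analysis.Analysis"
begin


locale pms =
  fixes \<rho> :: "'a \<Rightarrow> 'a \<Rightarrow> real \<Rightarrow> real"
    and \<tau> :: "(real \<Rightarrow> real) \<Rightarrow> (real \<Rightarrow> real) \<Rightarrow> (real \<Rightarrow> real)"
  assumes pm: "pm_space \<rho> \<tau>" and W: "condition_W \<tau>"
begin

lemma dp: "delta_plus (\<rho> p q)"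
  using pm by (simp add: pm_space_def)

lemma rho_mono: "x \<le> y \<Longrightarrow> \<rho> p q x \<le> \<rho> p q y"
  using dp[of p q] by (simp add: delta_plus_def mono_def)

lemma rho_ge0: "0 \<le> \<rho> p q x"
  using dp[of p q] by (simp add: delta_plus_def)

lemma rho_le1: "\<rho> p q x \<le> 1"
  using dp[of p q] by (simp add: delta_plus_def)

lemma rho_sym: "\<rho> p q = \<rho> q p"
  using pm by (simp add: pm_space_def)

lemma rho_pp: "\<rho> p p = eps0"
  using pm by (simp add: pm_space_def)

lemma rho_0: "x \<le> 0 \<Longrightarrow> \<rho> p q x = 0"
  using dp[of p q] rho_mono[of x 0 p q] rho_ge0[of p q x] by (simp add: delta_plus_def)

lemma tri: "\<tau> (\<rho> p q) (\<rho> q r) x \<le> \<rho> p r x"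
  using pm by (simp add: pm_space_def le_fun_def)

lemma triW: assumes "x > 0" shows "\<rho> p q x + \<rho> q r x - 1 \<le> \<rho> p r x"
proof (rule ccontr)
  assume neg: "\<not> ?thesis"
  define \<delta> where "\<delta> = (\<rho> p q x + \<rho> q r x - 1 - \<rho> p r x) / 2"
  have "\<delta> > 0" using neg by (simp add: \<delta>_def)
  have "\<tau> (\<rho> p q) (\<rho> q r) x > (\<rho> p q x - \<delta>) + (\<rho> q r x - \<delta>) - 1"
    using W assms dp \<open>\<delta> > 0\<close> unfolding condition_W_def
    by (metis diff_less_eq less_add_same_cancel1)
  with tri[of p q r x] show False by (simp add: \<delta>_def)
qed

definition Dm :: "'a \<Rightarrow> 'a \<Rightarrow> real" where
  "Dm p q = Inf {t. 0 < t \<and> 1 - t < \<rho> p q t}"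

lemma S_ne: "{t. 0 < t \<and> 1 - t < \<rho> p q t} \<noteq> {}"
proof -
  have "(2::real) \<in> {t. 0 < t \<and> 1 - t < \<rho> p q t}" using rho_ge0[of p q 2] by simp
  then show ?thesis by blast
qed

lemma S_bdd: "bdd_below {t. 0 < t \<and> 1 - t < \<rho> p q t}"
  by (rule bdd_belowI[of _ 0]) auto

lemma D_less: assumes "Dm p q < t" shows "1 - t < \<rho> p q t"
proof -
  obtain s where s: "0 < s" "1 - s < \<rho> p q s" "s < t"
    using cInf_lessD[OF S_ne assms[unfolded Dm_def]] by auto
  then show ?thesis using rho_mono[of s t p q] by linarith
qed

lemma D_le: assumes "0 < t" "1 - t < \<rho> p q t" shows "Dm p q \<le> t"
  unfolding Dm_def by (rule cInf_lower) (use assms S_bdd in auto)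

lemma D_ge0: "0 \<le> Dm p q"
  unfolding Dm_def by (rule cInf_greatest) (use S_ne in auto)

lemma D_sym: "Dm p q = Dm q p"
  unfolding Dm_def using rho_sym by metis

lemma D_pp: "Dm p p = 0"
proof (rule ccontr)
  assume "Dm p p \<noteq> 0"
  then have "0 < Dm p p" using D_ge0[of p p] by simp
  then have "Dm p p \<le> Dm p p / 2"
    by (intro D_le) (auto simp: rho_pp eps0_def)
  then show False using \<open>0 < Dm p p\<close> by simp
qed

lemma D_tri: "Dm p r \<le> Dm p q + Dm q r"
proof (rule field_le_epsilon)
  fix e :: real assume "0 < e"
  define a where "a = Dm p q + e/2"
  define b where "b = Dm q r + e/2"
  have a: "1 - a < \<rho> p q a" by (rule D_less) (use \<open>0<e\<close> in \<open>simp add: a_def\<close>)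
  have b: "1 - b < \<rho> q r b" by (rule D_less) (use \<open>0<e\<close> in \<open>simp add: b_def\<close>)
  have apos: "0 < a" "0 < b" using D_ge0[of p q] D_ge0[of q r] \<open>0<e\<close> by (auto simp: a_def b_def)
  have "\<rho> p q a \<le> \<rho> p q (a+b)" "\<rho> q r b \<le> \<rho> q r (a+b)"
    using apos by (auto intro: rho_mono)
  moreover have "\<rho> p q (a+b) + \<rho> q r (a+b) - 1 \<le> \<rho> p r (a+b)"
    using apos by (intro triW) auto
  ultimately have "1 - (a+b) < \<rho> p r (a+b)" using a b by linarith
  then have "Dm p r \<le> a + b" using apos by (intro D_le) auto
  then show "Dm p r \<le> Dm p q + Dm q r + e" by (simp add: a_def b_def)
qed

lemma D_zero: assumes "Dm p q = 0" shows "p = q"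
proof -
  have "\<rho> p q = eps0"
  proof
    fix x
    show "\<rho> p q x = eps0 x"
    proof (cases "x \<le> 0")
      case True then show ?thesis by (simp add: rho_0 eps0_def)
    next
      case False
      have "1 \<le> \<rho> p q x"
      proof (rule field_le_epsilon)
        fix e :: real assume "0 < e"
        define t where "t = min (x/2) e"
        have "0 < t" using False \<open>0<e\<close> by (simp add: t_def)
        have "1 - t < \<rho> p q t" using D_less[of p q t] assms \<open>0<t\<close> by simp
        moreover have "\<rho> p q t \<le> \<rho> p q x" using False by (intro rho_mono) (simp add: t_def)
        ultimately show "1 \<le> \<rho> p q x + e" by (simp add: t_def)
      qed
      then show ?thesis using rho_le1[of p q x] False by (simp add: eps0_def)
    qed
  qed
  then show ?thesis using pm by (simp add: pm_space_def)
qed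

sublocale M: Metric_space UNIV Dm
  by unfold_locales (auto simp: D_ge0 D_sym D_pp D_tri intro: D_zero)

lemma mball_nbhd: "M.mball p t \<subseteq> nbhd \<rho> t p"
  using D_less by (auto simp: M.mball_def nbhd_def)

lemma nbhd_D: "0 < t \<Longrightarrow> q \<in> nbhd \<rho> t p \<Longrightarrow> Dm p q \<le> t"
  using D_le by (auto simp: nbhd_def)

lemma open_iff: "pm_open \<rho> U \<longleftrightarrow> openin M.mtopology U"
proof
  assume L: "pm_open \<rho> U"
  show "openin M.mtopology U" unfolding M.openin_mtopology
  proof (intro conjI allI impI)
    fix x assume "x \<in> U"
    then obtain t where "t > 0" "nbhd \<rho> t x \<subseteq> U" using L by (auto simp: pm_open_def)
    then show "\<exists>r>0. M.mball x r \<subseteq> U" using mball_nbhd by blast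
  qed simp
next
  assume R: "openin M.mtopology U"
  show "pm_open \<rho> U" unfolding pm_open_def
  proof
    fix x assume "x \<in> U"
    then obtain r where "r > 0" "M.mball x r \<subseteq> U" using R by (auto simp: M.openin_mtopology)
    moreover have "nbhd \<rho> (r/2) x \<subseteq> M.mball x r"
      using nbhd_D[of "r/2"] \<open>r>0\<close> by (force simp: M.mball_def)
    ultimately show "\<exists>t>0. nbhd \<rho> t x \<subseteq> U" by (intro exI[of _ "r/2"]) auto
  qed
qed

lemma closed_iff: "pm_closed \<rho> A \<longleftrightarrow> closedin M.mtopology A"
  by (simp add: pm_closed_def open_iff closedin_def Compl_eq_Diff_UNIV)

lemma compact_iff: "pm_compact \<rho> K \<longleftrightarrow> compactin M.mtopology K"
proof -
  have "compactin M.mtopology K \<longleftrightarrow> (\<forall>\<U>. (\<forall>U\<in>\<U>. openin M.mtopology U) \<and> K \<subseteq> \<Union>\<U> \<longrightarrow>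
      (\<exists>\<F>. finite \<F> \<and> \<F> \<subseteq> \<U> \<and> K \<subseteq> \<Union>\<F>))"
    unfolding compactin_def by simp
  also have "\<dots> \<longleftrightarrow> pm_compact \<rho> K"
    unfolding pm_compact_def open_iff by (metis (no_types, lifting))
  finally show ?thesis by simp
qed

lemma tb_imp: assumes "M.mtotally_bounded S" shows "pm_totally_bounded \<rho> S"
  unfolding pm_totally_bounded_def
proof (intro allI impI)
  fix t :: real assume "t > 0"
  then obtain K where "finite K" "K \<subseteq> S" "S \<subseteq> (\<Union>x\<in>K. M.mball x t)"
    using assms by (auto simp: M.mtotally_bounded_def)
  moreover have "(\<Union>x\<in>K. M.mball x t) \<subseteq> (\<Union>z\<in>K. nbhd \<rho> t z)"
    using mball_nbhd by (meson UN_mono order_refl)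
  ultimately show "\<exists>Z. finite Z \<and> S \<subseteq> (\<Union>z\<in>Z. nbhd \<rho> t z)"
    by blast
qed

lemma tb_imp2: assumes "pm_totally_bounded \<rho> S" shows "M.mtotally_bounded S"
  unfolding M.mtotally_bounded_def
proof (intro allI impI)
  fix e :: real assume "e > 0"
  define t where "t = e/3"
  have "t > 0" using \<open>e>0\<close> by (simp add: t_def)
  then obtain Z where Z: "finite Z" "S \<subseteq> (\<Union>z\<in>Z. nbhd \<rho> t z)"
    using assms by (auto simp: pm_totally_bounded_def)
  define Z' where "Z' = {z\<in>Z. S \<inter> nbhd \<rho> t z \<noteq> {}}"
  define f where "f z = (SOME x. x \<in> S \<inter> nbhd \<rho> t z)" for z
  have f: "f z \<in> S \<inter> nbhd \<rho> t z" if "z \<in> Z'" for z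
  proof -
    have "\<exists>x. x \<in> S \<inter> nbhd \<rho> t z" using that unfolding Z'_def by blast
    then show ?thesis unfolding f_def by (rule someI_ex)
  qed
  show "\<exists>K. finite K \<and> K \<subseteq> S \<and> S \<subseteq> (\<Union>x\<in>K. M.mball x e)"
  proof (intro exI conjI)
    show "finite (f ` Z')" using Z by (simp add: Z'_def)
    show "f ` Z' \<subseteq> S" using f by auto
    show "S \<subseteq> (\<Union>x\<in>f ` Z'. M.mball x e)"
    proof
      fix x assume "x \<in> S"
      then obtain z where z: "z \<in> Z" "x \<in> nbhd \<rho> t z" using Z by auto
      then have "z \<in> Z'" using \<open>x\<in>S\<close> by (auto simp: Z'_def)
      have "Dm z x \<le> t" "Dm z (f z) \<le> t" using nbhd_D \<open>t>0\<close> z f[OF \<open>z\<in>Z'\<close>] by auto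
      moreover have "Dm (f z) x \<le> Dm (f z) z + Dm z x" by (rule D_tri)
      moreover have "Dm (f z) z = Dm z (f z)" by (rule D_sym)
      ultimately have "Dm (f z) x < e" using \<open>t>0\<close> unfolding t_def by linarith
      then show "x \<in> (\<Union>x\<in>f ` Z'. M.mball x e)" using \<open>z\<in>Z'\<close> by (auto simp: M.mball_def)
    qed
  qed
qed

lemma complete_imp: assumes "pm_complete \<rho>" shows "M.mcomplete"
  unfolding M.mcomplete_def
proof (intro allI impI)
  fix \<sigma> assume "M.MCauchy \<sigma>"
  have "pm_cauchy \<rho> \<sigma>" unfolding pm_cauchy_def
  proof (intro allI impI)
    fix t :: real assume "t > 0"
    then obtain N where "\<forall>n n'. N \<le> n \<longrightarrow> N \<le> n' \<longrightarrow> Dm (\<sigma> n) (\<sigma> n') < t"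
      using \<open>M.MCauchy \<sigma>\<close> by (auto simp: M.MCauchy_def)
    then show "\<exists>N. \<forall>m\<ge>N. \<forall>n\<ge>N. 1 - t < \<rho> (\<sigma> m) (\<sigma> n) t" using D_less by blast
  qed
  then obtain p where p: "pm_converges \<rho> \<sigma> p" using assms by (auto simp: pm_complete_def)
  have "limitin M.mtopology \<sigma> p sequentially" unfolding M.limitin_metric
  proof (intro conjI allI impI)
    fix e :: real assume "e > 0"
    then obtain N where N: "\<forall>n\<ge>N. 1 - e/2 < \<rho> p (\<sigma> n) (e/2)"
      using p by (auto simp: pm_converges_def dest: spec[of _ "e/2"])
    have "\<forall>n\<ge>N. Dm (\<sigma> n) p < e"
    proof (intro allI impI)
      fix n assume "N \<le> n"
      then have "Dm p (\<sigma> n) \<le> e/2" using D_le[of "e/2"] N \<open>e>0\<close> by simp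
      then show "Dm (\<sigma> n) p < e" using D_sym[of p "\<sigma> n"] \<open>e>0\<close> by linarith
    qed
    then show "\<forall>\<^sub>F n in sequentially. \<sigma> n \<in> UNIV \<and> Dm (\<sigma> n) p < e"
      by (auto simp: eventually_sequentially)
  qed simp
  then show "\<exists>x. limitin M.mtopology \<sigma> x sequentially" by blast
qed

lemma Fpt_bdd: "bdd_above ((\<lambda>q. \<rho> p q x) ` B)"
  by (rule bdd_aboveI[of _ 1]) (auto simp: rho_le1)

lemma Fpt_ge: "q \<in> B \<Longrightarrow> \<rho> p q x \<le> F_pt_set \<rho> p B x"
  unfolding F_pt_set_def by (rule cSUP_upper[OF _ Fpt_bdd])

lemma Fpt_le1: "B \<noteq> {} \<Longrightarrow> F_pt_set \<rho> p B x \<le> 1"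
  unfolding F_pt_set_def by (rule cSUP_least) (auto simp: rho_le1)

lemma Fpt_ge0: "B \<noteq> {} \<Longrightarrow> 0 \<le> F_pt_set \<rho> p B x"
  using Fpt_ge rho_ge0 by (meson equals0I order_trans)

lemma Fpt_less: "B \<noteq> {} \<Longrightarrow> c < F_pt_set \<rho> p B x \<Longrightarrow> \<exists>q\<in>B. c < \<rho> p q x"
  unfolding F_pt_set_def using less_cSUP_iff[OF _ Fpt_bdd] by blast

lemma Gam_le: assumes "p \<in> A" "B \<noteq> {}" shows "Gamma_star \<rho> A B x \<le> F_pt_set \<rho> p B x"
  unfolding Gamma_star_def
proof (rule cINF_lower[OF _ assms(1)])
  show "bdd_below ((\<lambda>p. F_pt_set \<rho> p B x) ` A)"
    by (rule bdd_belowI[of _ 0]) (use Fpt_ge0[OF assms(2)] in blast)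
qed

lemma Gam_le1: "A \<noteq> {} \<Longrightarrow> B \<noteq> {} \<Longrightarrow> Gamma_star \<rho> A B x \<le> 1"
  using Gam_le Fpt_le1 by (meson equals0I order_trans)

lemma Gam_ge: "A \<noteq> {} \<Longrightarrow> (\<And>p. p \<in> A \<Longrightarrow> c \<le> F_pt_set \<rho> p B x) \<Longrightarrow> c \<le> Gamma_star \<rho> A B x"
  unfolding Gamma_star_def by (rule cINF_greatest)

lemma Fs_bdd: assumes "A \<noteq> {}" "B \<noteq> {}" shows "bdd_above ((\<lambda>x'. Gamma_star \<rho> A B x') ` X)"
  by (rule bdd_aboveI[of _ 1]) (use Gam_le1[OF assms] in blast)

lemma Fs_ge: "A \<noteq> {} \<Longrightarrow> B \<noteq> {} \<Longrightarrow> x' < t \<Longrightarrow> Gamma_star \<rho> A B x' \<le> F_star \<rho> A B t"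
  unfolding F_star_def by (rule cSUP_upper[OF _ Fs_bdd]) auto

lemma FS_imp:
  assumes "A \<noteq> {}" "B \<noteq> {}" "1 - t < F_star \<rho> A B t"
  shows "\<forall>p\<in>A. \<exists>q\<in>B. 1 - t < \<rho> p q t"
proof
  fix p assume "p \<in> A"
  have "{..<t} \<noteq> {}" by auto
  then obtain x' where x': "x' < t" "1 - t < Gamma_star \<rho> A B x'"
    using assms(3) less_cSUP_iff[OF _ Fs_bdd[OF assms(1,2)]] unfolding F_star_def by auto
  then have "1 - t < F_pt_set \<rho> p B x'" using Gam_le[OF \<open>p\<in>A\<close> assms(2), of x'] by linarith
  then obtain q where "q \<in> B" "1 - t < \<rho> p q x'" using Fpt_less assms(2) by blast
  moreover have "\<rho> p q x' \<le> \<rho> p q t" using x' by (intro rho_mono) simp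
  ultimately show "\<exists>q\<in>B. 1 - t < \<rho> p q t" by force
qed

lemma FS_from:
  assumes "A \<noteq> {}" "B \<noteq> {}" "s < t" "\<forall>p\<in>A. \<exists>q\<in>B. 1 - s < \<rho> p q s"
  shows "1 - t < F_star \<rho> A B t"
proof -
  have "1 - s \<le> Gamma_star \<rho> A B s"
  proof (rule Gam_ge[OF assms(1)])
    fix p assume "p \<in> A"
    then obtain q where "q \<in> B" "1 - s < \<rho> p q s" using assms(4) by blast
    then show "1 - s \<le> F_pt_set \<rho> p B s" using Fpt_ge[of q B p s] by linarith
  qed
  also have "\<dots> \<le> F_star \<rho> A B t" using Fs_ge assms by blast
  finally show ?thesis using assms(3) by linarith
qed

definition Hd :: "'a set \<Rightarrow> 'a set \<Rightarrow> real \<Rightarrow> bool" where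
  "Hd A B e \<longleftrightarrow> (\<forall>p\<in>A. \<exists>q\<in>B. Dm p q < e) \<and> (\<forall>q\<in>B. \<exists>p\<in>A. Dm q p < e)"

lemma H_imp:
  assumes "A \<noteq> {}" "B \<noteq> {}" "1 - t < pm_H \<rho> A B t"
  shows "\<forall>p\<in>A. \<exists>q\<in>B. 1 - t < \<rho> p q t" "\<forall>q\<in>B. \<exists>p\<in>A. 1 - t < \<rho> q p t"
  using FS_imp[OF assms(1,2)] FS_imp[OF assms(2,1)] assms(3) by (auto simp: pm_H_def)

lemma H_to_Hd:
  assumes "A \<noteq> {}" "B \<noteq> {}" "0 < t" "1 - t < pm_H \<rho> A B t"
  shows "Hd A B (2*t)"
proof -
  have *: "Dm p q < 2*t" if "1 - t < \<rho> p q t" for p q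
    using D_le[OF assms(3) that] assms(3) by linarith
  show ?thesis unfolding Hd_def
  proof (intro conjI ballI)
    fix p assume "p \<in> A"
    then obtain q where "q \<in> B" "1 - t < \<rho> p q t" using H_imp(1)[OF assms(1,2,4)] by blast
    then show "\<exists>q\<in>B. Dm p q < 2*t" using * by blast
  next
    fix q assume "q \<in> B"
    then obtain p where "p \<in> A" "1 - t < \<rho> q p t" using H_imp(2)[OF assms(1,2,4)] by blast
    then show "\<exists>p\<in>A. Dm q p < 2*t" using * by blast
  qed
qed

lemma Hd_to_H:
  assumes "A \<noteq> {}" "B \<noteq> {}" "0 < t" "Hd A B (t/2)"
  shows "1 - t < pm_H \<rho> A B t"
proof -
  have a1: "\<forall>p\<in>A. \<exists>q\<in>B. 1 - t/2 < \<rho> p q (t/2)"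
  proof
    fix p assume "p \<in> A"
    then obtain q where "q \<in> B" "Dm p q < t/2" using assms(4) unfolding Hd_def by blast
    then show "\<exists>q\<in>B. 1 - t/2 < \<rho> p q (t/2)" using D_less by blast
  qed
  have a2: "\<forall>q\<in>B. \<exists>p\<in>A. 1 - t/2 < \<rho> q p (t/2)"
  proof
    fix q assume "q \<in> B"
    then obtain p where "p \<in> A" "Dm q p < t/2" using assms(4) unfolding Hd_def by blast
    then show "\<exists>p\<in>A. 1 - t/2 < \<rho> q p (t/2)" using D_less by blast
  qed
  have "t/2 < t" using assms(3) by simp
  have "1 - t < F_star \<rho> A B t" by (rule FS_from[OF assms(1,2) \<open>t/2 < t\<close> a1])
  moreover have "1 - t < F_star \<rho> B A t" by (rule FS_from[OF assms(2,1) \<open>t/2 < t\<close> a2])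
  ultimately show ?thesis unfolding pm_H_def by simp
qed

lemma Hconv_iff:
  assumes ne: "\<And>n. As n \<noteq> {}" "A \<noteq> {}"
  shows "H_converges \<rho> As A \<longleftrightarrow> (\<forall>e>0. \<exists>N. \<forall>n\<ge>N. Hd (As n) A e)"
proof
  assume L: "H_converges \<rho> As A"
  show "\<forall>e>0. \<exists>N. \<forall>n\<ge>N. Hd (As n) A e"
  proof (intro allI impI)
    fix e :: real assume "e > 0"
    then have "e/2 > 0" by simp
    then obtain N where N: "\<forall>n\<ge>N. 1 - e/2 < pm_H \<rho> (As n) A (e/2)"
      using L unfolding H_converges_def by blast
    have "Hd (As n) A e" if "n \<ge> N" for n
      using H_to_Hd[OF ne(1)[of n] ne(2) \<open>e/2 > 0\<close>] N that by simp
    then show "\<exists>N. \<forall>n\<ge>N. Hd (As n) A e" by blast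
  qed
next
  assume R: "\<forall>e>0. \<exists>N. \<forall>n\<ge>N. Hd (As n) A e"
  show "H_converges \<rho> As A" unfolding H_converges_def
  proof (intro allI impI)
    fix t :: real assume "t > 0"
    then have "t/2 > 0" by simp
    then obtain N where N: "\<forall>n\<ge>N. Hd (As n) A (t/2)" using R by blast
    have "1 - t < pm_H \<rho> (As n) A t" if "n \<ge> N" for n
      using Hd_to_H[OF ne(1)[of n] ne(2) \<open>t > 0\<close>] N that by simp
    then show "\<exists>N. \<forall>n\<ge>N. 1 - t < pm_H \<rho> (As n) A t" by blast
  qed
qed

lemma Hcauchy_imp:
  assumes ne: "\<And>n. As n \<noteq> {}" and C: "H_cauchy \<rho> As"
  shows "\<forall>e>0. \<exists>N. \<forall>m\<ge>N. \<forall>n\<ge>N. Hd (As m) (As n) e"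
proof (intro allI impI)
  fix e :: real assume "e > 0"
  then have "e/2 > 0" by simp
  then obtain N where N: "\<forall>m\<ge>N. \<forall>n\<ge>N. 1 - e/2 < pm_H \<rho> (As m) (As n) (e/2)"
    using C unfolding H_cauchy_def by blast
  have "Hd (As m) (As n) e" if "m \<ge> N" "n \<ge> N" for m n
    using H_to_Hd[OF ne(1)[of m] ne(1)[of n] \<open>e/2 > 0\<close>] N that by simp
  then show "\<exists>N. \<forall>m\<ge>N. \<forall>n\<ge>N. Hd (As m) (As n) e" by blast
qed

end


context pms
begin

lemma Phi_le: assumes "p \<in> A" "p' \<in> A" shows "Phi \<rho> A t \<le> \<rho> p p' t"
proof -
  have "Phi \<rho> A t \<le> \<rho> (fst (p,p')) (snd (p,p')) t"
    unfolding Phi_def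
  proof (rule cINF_lower)
    show "bdd_below ((\<lambda>pp'. \<rho> (fst pp') (snd pp') t) ` (A \<times> A))"
      by (rule bdd_belowI[of _ 0]) (auto simp: rho_ge0)
  qed (use assms in auto)
  then show ?thesis by simp
qed

lemma Phi_ge: assumes "A \<noteq> {}" "\<And>p p'. p \<in> A \<Longrightarrow> p' \<in> A \<Longrightarrow> c \<le> \<rho> p p' t"
  shows "c \<le> Phi \<rho> A t"
  unfolding Phi_def by (rule cINF_greatest) (use assms in auto)

lemma Phi_le1: assumes "A \<noteq> {}" shows "Phi \<rho> A t \<le> 1"
proof -
  obtain p where "p \<in> A" using assms by blast
  then show ?thesis using Phi_le[of p A p t] rho_le1[of p p t] by linarith
qed

lemma Phi_mono: assumes "A \<noteq> {}" "t \<le> T" shows "Phi \<rho> A t \<le> Phi \<rho> A T"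
  by (rule Phi_ge[OF assms(1)]) (meson Phi_le assms(2) order_trans rho_mono)

lemma bounded_closed:
  assumes As: "\<And>n. As n \<in> Pfb \<rho>" and A: "A \<in> Pf \<rho>" and conv: "H_converges \<rho> As A"
  shows "A \<in> Pfb \<rho>"
proof -
  have neA: "A \<noteq> {}" using A by (simp add: Pf_def)
  have neAs: "As n \<noteq> {}" for n using As[of n] by (simp add: Pfb_def)
  have bAs: "(SUP t\<in>{0<..}. Phi \<rho> (As n) t) = 1" for n using As[of n] by (simp add: Pfb_def pm_bounded_def)
  have bdd: "bdd_above ((\<lambda>t. Phi \<rho> B t) ` {0<..})" if "B \<noteq> {}" for B
    by (rule bdd_aboveI[of _ 1]) (use Phi_le1[OF that] in blast)
  have key: "1 - e \<le> (SUP t\<in>{0<..}. Phi \<rho> A t)" if "e > 0" for e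
  proof -
    define e' where "e' = e/4"
    have "e' > 0" using that by (simp add: e'_def)
    then obtain N where N: "\<forall>n\<ge>N. 1 - e' < pm_H \<rho> (As n) A e'"
      using conv unfolding H_converges_def by blast
    then have close: "\<forall>p\<in>A. \<exists>q\<in>As N. 1 - e' < \<rho> p q e'"
      using H_imp(2)[OF neAs[of N] neA] by blast
    have "1 - e' < (SUP t\<in>{0<..}. Phi \<rho> (As N) t)" using bAs[of N] \<open>e'>0\<close> by simp
    then obtain t where t: "t > 0" "1 - e' < Phi \<rho> (As N) t"
      using less_cSUP_iff[OF _ bdd[OF neAs[of N]]] by fastforce
    define T where "T = max t e'"
    have "T > 0" "t \<le> T" "e' \<le> T" using t by (auto simp: T_def)
    have "1 - 3*e' \<le> Phi \<rho> A T"
    proof (rule Phi_ge[OF neA])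
      fix p p' assume "p \<in> A" "p' \<in> A"
      then obtain q q' where q: "q \<in> As N" "1 - e' < \<rho> p q e'" and q': "q' \<in> As N" "1 - e' < \<rho> p' q' e'"
        using close by meson
      have 1: "1 - e' < \<rho> p q T" using q rho_mono[OF \<open>e' \<le> T\<close>, of p q] by linarith
      have 2: "1 - e' < \<rho> q q' T" using t Phi_mono[OF neAs[of N] \<open>t \<le> T\<close>] Phi_le[OF q(1) q'(1), of T]
        by linarith
      have 3: "1 - e' < \<rho> q' p' T" using q' rho_mono[OF \<open>e' \<le> T\<close>, of p' q'] rho_sym[of p' q'] by simp
      have "\<rho> p q T + \<rho> q q' T - 1 \<le> \<rho> p q' T" using triW[OF \<open>T>0\<close>] by blast
      moreover have "\<rho> p q' T + \<rho> q' p' T - 1 \<le> \<rho> p p' T" using triW[OF \<open>T>0\<close>] by blast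
      ultimately show "1 - 3*e' \<le> \<rho> p p' T" using 1 2 3 by linarith
    qed
    also have "\<dots> \<le> (SUP t\<in>{0<..}. Phi \<rho> A t)"
      by (rule cSUP_upper[OF _ bdd[OF neA]]) (use \<open>T>0\<close> in simp)
    finally show ?thesis using that by (simp add: e'_def)
  qed
  have le: "(SUP t\<in>{0<..}. Phi \<rho> A t) \<le> 1"
    by (rule cSUP_least) (auto simp: Phi_le1[OF neA])
  have "1 \<le> (SUP t\<in>{0<..}. Phi \<rho> A t)"
  proof (rule field_le_epsilon)
    fix e :: real assume "e > 0" then show "1 \<le> (SUP t\<in>{0<..}. Phi \<rho> A t) + e" using key[of e] by linarith
  qed
  then have "pm_bounded \<rho> A" using le unfolding pm_bounded_def by linarith
  then show ?thesis using A by (simp add: Pf_def Pfb_def)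
qed

lemma tb_closed:
  assumes As: "\<And>n. As n \<in> Pftb \<rho>" and A: "A \<in> Pf \<rho>" and conv: "H_converges \<rho> As A"
  shows "A \<in> Pftb \<rho>"
proof -
  have neA: "A \<noteq> {}" using A by (simp add: Pf_def)
  have neAs: "As n \<noteq> {}" for n using As[of n] by (simp add: Pftb_def)
  have "pm_totally_bounded \<rho> A" unfolding pm_totally_bounded_def
  proof (intro allI impI)
    fix t :: real assume "t > 0"
    then have "t/2 > 0" by simp
    then obtain N where N: "\<forall>n\<ge>N. 1 - t/2 < pm_H \<rho> (As n) A (t/2)"
      using conv unfolding H_converges_def by blast
    then have close: "\<forall>p\<in>A. \<exists>q\<in>As N. 1 - t/2 < \<rho> p q (t/2)"
      using H_imp(2)[OF neAs[of N] neA] by blast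
    obtain Z where Z: "finite Z" "As N \<subseteq> (\<Union>z\<in>Z. nbhd \<rho> (t/2) z)"
      using As[of N] \<open>t/2>0\<close> unfolding Pftb_def pm_totally_bounded_def by blast
    have "A \<subseteq> (\<Union>z\<in>Z. nbhd \<rho> t z)"
    proof
      fix p assume "p \<in> A"
      then obtain q where q: "q \<in> As N" "1 - t/2 < \<rho> p q (t/2)" using close by blast
      then obtain z where z: "z \<in> Z" "1 - t/2 < \<rho> z q (t/2)" using Z by (auto simp: nbhd_def)
      have "\<rho> z q (t/2) \<le> \<rho> z q t" "\<rho> p q (t/2) \<le> \<rho> p q t" using \<open>t>0\<close> by (auto intro: rho_mono)
      moreover have "\<rho> z q t + \<rho> q p t - 1 \<le> \<rho> z p t" using triW[OF \<open>t>0\<close>] by blast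
      moreover have "\<rho> q p t = \<rho> p q t" using rho_sym by metis
      ultimately have "1 - t < \<rho> z p t" using q z by linarith
      then show "p \<in> (\<Union>z\<in>Z. nbhd \<rho> t z)" using z by (auto simp: nbhd_def)
    qed
    then show "\<exists>Z. finite Z \<and> A \<subseteq> (\<Union>z\<in>Z. nbhd \<rho> t z)" using Z by blast
  qed
  then show ?thesis using A by (simp add: Pf_def Pftb_def)
qed

end


lemma pow_small: assumes "(0::real) < e" "0 < \<epsilon>" shows "\<exists>N::nat. e / 2^N < \<epsilon>"
proof -
  obtain N where "(1/2::real)^N < \<epsilon>/e" using real_arch_pow_inv[of "\<epsilon>/e" "1/2"] assms by auto
  then have "e * (1/2)^N < \<epsilon>" using assms by (simp add: field_simps)
  then show ?thesis by (auto simp: power_one_over field_simps)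
qed

lemma arith_aux: "(D1::real) \<le> D0 + d \<Longrightarrow> d < a/2 \<Longrightarrow> D0 \<le> b - a \<Longrightarrow> D1 \<le> b - a/2"
  by linarith

lemma arith2: "(x::real) \<le> b - a \<Longrightarrow> 0 < a \<Longrightarrow> x < b"
  by linarith

lemma arith3: "(x::real) \<le> y + z \<Longrightarrow> y < a/2 \<Longrightarrow> z < a/2 \<Longrightarrow> a < \<epsilon> \<Longrightarrow> x < \<epsilon>"
  by linarith

lemma arith4: "(x::real) \<le> y + w \<Longrightarrow> w \<le> u + z \<Longrightarrow> y < \<delta>/3 \<Longrightarrow> u < a/2 \<Longrightarrow> z < a/4 \<Longrightarrow> a < \<delta>/3 \<Longrightarrow> 0 < \<delta> \<Longrightarrow> x < \<delta>"
  by linarith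

lemma arith5: "(x::real) \<le> y + z \<Longrightarrow> y < e/2 \<Longrightarrow> z < e/2 \<Longrightarrow> x < e"
  by linarith

context pms
begin

lemma complete_Pf:
  assumes comp: "pm_complete \<rho>" and As: "\<And>n. As n \<in> Pf \<rho>" and C: "H_cauchy \<rho> As"
  shows "\<exists>A\<in>Pf \<rho>. H_converges \<rho> As A"
proof -
  have ne: "As n \<noteq> {}" for n using As[of n] by (simp add: Pf_def)
  have HC: "\<forall>e>0. \<exists>N. \<forall>m\<ge>N. \<forall>n\<ge>N. Hd (As m) (As n) e" using Hcauchy_imp[OF ne C] .
  have mc: "M.mcomplete" using complete_imp[OF comp] .
  define A where "A = {p. \<forall>e>0. \<exists>N. \<forall>n\<ge>N. \<exists>q\<in>As n. Dm p q < e}"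
  have part_i: "\<exists>N. \<forall>n\<ge>N. \<forall>x\<in>As n. \<exists>p\<in>A. Dm x p < e" if "e > 0" for e
  proof -
    have "\<forall>k::nat. \<exists>N. \<forall>m\<ge>N. \<forall>n\<ge>N. Hd (As m) (As n) (e / 2^(k+2))"
    proof
      fix k :: nat
      have "e / 2^(k+2) > 0" using that by simp
      then show "\<exists>N. \<forall>m\<ge>N. \<forall>n\<ge>N. Hd (As m) (As n) (e / 2^(k+2))" using HC by blast
    qed
    from choice[OF this] obtain Nf where Nf0: "\<forall>k. \<forall>m\<ge>Nf k. \<forall>n\<ge>Nf k. Hd (As m) (As n) (e / 2^(k+2))"
      by blast
    have Nf: "\<And>k m n. m \<ge> Nf k \<Longrightarrow> n \<ge> Nf k \<Longrightarrow> Hd (As m) (As n) (e / 2^(k+2))"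
      using Nf0 by blast
    have "\<forall>x\<in>As n. \<exists>p\<in>A. Dm x p < e" if "n \<ge> Nf 0" for n
    proof
      fix x assume "x \<in> As n"
      define M where "M k = (if k = 0 then n else max (Nf k) (Nf (k-1)))" for k
      have M1: "M k \<ge> Nf k" for k using \<open>n \<ge> Nf 0\<close> by (simp add: M_def)
      have M2: "M (Suc k) \<ge> Nf k" for k by (simp add: M_def)
      define xs where "xs = rec_nat x (\<lambda>k y. SOME y'. y' \<in> As (M (Suc k)) \<and> Dm y y' < e / 2^(k+2))"
      have xs0: "xs 0 = x" by (simp add: xs_def)
      have xsS: "xs (Suc k) = (SOME y'. y' \<in> As (M (Suc k)) \<and> Dm (xs k) y' < e / 2^(k+2))" for k
        by (simp add: xs_def)
      have step: "xs (Suc k) \<in> As (M (Suc k)) \<and> Dm (xs k) (xs (Suc k)) < e / 2^(k+2)"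
        if "xs k \<in> As (M k)" for k
      proof -
        have "Hd (As (M k)) (As (M (Suc k))) (e / 2^(k+2))" using Nf[OF M1[of k] M2[of k]] .
        then have "\<exists>y'. y' \<in> As (M (Suc k)) \<and> Dm (xs k) y' < e / 2^(k+2)"
          using that unfolding Hd_def by blast
        then show ?thesis unfolding xsS by (rule someI_ex)
      qed
      have mem: "xs k \<in> As (M k)" for k
      proof (induction k)
        case 0 then show ?case using \<open>x \<in> As n\<close> by (simp add: xs0 M_def)
      next
        case (Suc k) show ?case using step[OF Suc.IH] by (rule conjunct1)
      qed
      have dst: "Dm (xs k) (xs (Suc k)) < e / 2^(k+2)" for k using step[OF mem[of k]] by (rule conjunct2)
      have bound: "Dm (xs k) (xs (k + j)) \<le> e / 2^(k+1) - e / 2^(k+j+1)" for k j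
      proof (induction j)
        case 0 then show ?case by (simp add: M.mdist_zero)
      next
        case (Suc j)
        have f1: "Dm (xs k) (xs (k + Suc j)) \<le> Dm (xs k) (xs (k + j)) + Dm (xs (k+j)) (xs (Suc (k + j)))"
          using D_tri by simp
        have f2: "Dm (xs (k+j)) (xs (Suc (k + j))) < e / 2^(k+j+2)" using dst by simp
        have f3: "e / 2^(k+j+2) = e / 2^(k+j+1) / 2" by (simp add: field_simps)
        have f2': "Dm (xs (k+j)) (xs (Suc (k + j))) < e / 2^(k+j+1) / 2" 
          using f2 unfolding f3 .
        have X: "Dm (xs k) (xs (k + Suc j)) \<le> e / 2^(k+1) - e / 2^(k+j+1) / 2"
          by (rule arith_aux[OF f1 f2' Suc.IH])
        have f4: "e / 2^(k + Suc j + 1) = e / 2^(k+j+1) / 2" by (simp add: field_simps)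
        show ?case unfolding f4 by (rule X)
      qed
      have bound2: "Dm (xs k) (xs m) < e / 2^(k+1)" if km: "k \<le> m" for k m
      proof -
        obtain j where mj: "m = k + j" using le_Suc_ex[OF km] by blast
        have "e / 2^(k+j+1) > 0" using \<open>e>0\<close> by simp
        then show ?thesis unfolding mj by (rule arith2[OF bound[of k j]])
      qed
      have "M.MCauchy xs" unfolding M.MCauchy_def
      proof (intro conjI allI impI)
        fix \<epsilon> :: real assume "\<epsilon> > 0"
        then obtain N where N: "e / 2^N < \<epsilon>" using pow_small \<open>e>0\<close> by blast
        have "Dm (xs n1) (xs n2) < \<epsilon>" if "N \<le> n1" "N \<le> n2" for n1 n2
        proof -
          have h: "e / 2^(N+1) = e / 2^N / 2" by (simp add: field_simps)
          have a1: "Dm (xs n1) (xs N) < e / 2^N / 2"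
            using bound2[OF that(1)] D_sym[of "xs n1" "xs N"] unfolding h by simp
          have a2: "Dm (xs N) (xs n2) < e / 2^N / 2"
            using bound2[OF that(2)] unfolding h .
          show ?thesis by (rule arith3[OF D_tri a1 a2 N])
        qed
        then show "\<exists>N. \<forall>n n'. N \<le> n \<longrightarrow> N \<le> n' \<longrightarrow> Dm (xs n) (xs n') < \<epsilon>" by blast
      qed simp
      then obtain p where "limitin M.mtopology xs p sequentially" using mc M.mcomplete_def by blast
      then have lim: "\<exists>J. \<forall>j\<ge>J. Dm (xs j) p < \<epsilon>" if "\<epsilon> > 0" for \<epsilon>
        using that unfolding M.limitin_metric eventually_sequentially by blast
      have "p \<in> A" unfolding A_def
      proof (intro CollectI allI impI)
        fix \<delta> :: real assume "\<delta> > 0"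
        then obtain k where k: "e / 2^k < \<delta>/3" using pow_small \<open>e>0\<close> by (meson divide_pos_pos zero_less_numeral)
        obtain J where J: "\<forall>j\<ge>J. Dm (xs j) p < \<delta>/3" using lim \<open>\<delta>>0\<close> by (meson divide_pos_pos zero_less_numeral)
        define j where "j = max k J"
        have "\<exists>q\<in>As m. Dm p q < \<delta>" if "m \<ge> Nf k" for m
        proof -
          have "Hd (As (M k)) (As m) (e / 2^(k+2))" using Nf M1 that by blast
          then obtain q where q: "q \<in> As m" "Dm (xs k) q < e / 2^(k+2)" using mem unfolding Hd_def by blast
          have h1: "e / 2^(k+1) = e / 2^k / 2" and h2: "e / 2^(k+2) = e / 2^k / 4"
            by (simp_all add: field_simps)
          have b1: "Dm p (xs j) < \<delta>/3" using J D_sym[of p "xs j"] by (simp add: j_def)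
          have b2: "Dm (xs j) (xs k) < e / 2^k / 2"
            using bound2[of k j] D_sym[of "xs j" "xs k"] unfolding h1 by (simp add: j_def)
          have b3: "Dm (xs k) q < e / 2^k / 4" using q(2) unfolding h2 .
          have "Dm p q < \<delta>" by (rule arith4[OF D_tri D_tri b1 b2 b3 k \<open>\<delta> > 0\<close>])
          then show ?thesis using q by blast
        qed
        then show "\<exists>N. \<forall>n\<ge>N. \<exists>q\<in>As n. Dm p q < \<delta>" by blast
      qed
      moreover have "Dm x p < e"
      proof -
        obtain J where J: "\<forall>j\<ge>J. Dm (xs j) p < e/2" using lim \<open>e>0\<close> by (meson half_gt_zero)
        have c1: "Dm x (xs J) < e / 2" using bound2[of 0 J] xs0 by simp
        have c2: "Dm (xs J) p < e / 2" using J by simp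
        show ?thesis by (rule arith5[OF D_tri c1 c2])
      qed
      ultimately show "\<exists>p\<in>A. Dm x p < e" by blast
    qed
    then show ?thesis by blast
  qed
  have part_ii: "\<exists>N. \<forall>n\<ge>N. \<forall>p\<in>A. \<exists>q\<in>As n. Dm p q < e" if "e > 0" for e
  proof -
    have "e/2 > 0" using that by simp
    then obtain N where N: "\<forall>m\<ge>N. \<forall>n\<ge>N. Hd (As m) (As n) (e/2)" using HC by blast
    have "\<exists>q\<in>As n. Dm p q < e" if "n \<ge> N" "p \<in> A" for n p
    proof -
      obtain N' where N': "\<forall>m\<ge>N'. \<exists>q\<in>As m. Dm p q < e/2" using \<open>p \<in> A\<close> \<open>e/2 > 0\<close> unfolding A_def by blast
      define m where "m = max N N'"
      have "m \<ge> N'" by (simp add: m_def)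
      then obtain q where q: "q \<in> As m" "Dm p q < e/2" using N' by blast
      have "Hd (As m) (As n) (e/2)" using N that by (simp add: m_def)
      then obtain q' where q': "q' \<in> As n" "Dm q q' < e/2" using q unfolding Hd_def by blast
      have "Dm p q' \<le> Dm p q + Dm q q'" by (rule D_tri)
      then show ?thesis using q q' by (intro bexI[of _ q']) auto
    qed
    then show ?thesis by blast
  qed
  have neA: "A \<noteq> {}"
  proof -
    obtain N where N: "\<forall>n\<ge>N. \<forall>x\<in>As n. \<exists>p\<in>A. Dm x p < 1" using part_i[of 1] by auto
    obtain x where "x \<in> As N" using ne by blast
    then show ?thesis using N by blast
  qed
  have "openin M.mtopology (UNIV - A)" unfolding M.openin_mtopology
  proof (intro conjI allI impI)
    fix p assume "p \<in> UNIV - A"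
    then obtain e where e: "e > 0" "\<forall>N. \<exists>n\<ge>N. \<forall>q\<in>As n. \<not> Dm p q < e"
      unfolding A_def by auto
    have "M.mball p (e/2) \<subseteq> UNIV - A"
    proof
      fix y assume y: "y \<in> M.mball p (e/2)"
      have "y \<notin> A"
      proof
        assume "y \<in> A"
        moreover have "e/2 > 0" using e(1) by simp
        ultimately obtain N where N: "\<forall>n\<ge>N. \<exists>q\<in>As n. Dm y q < e/2" unfolding A_def
          by blast
        obtain n where n: "n \<ge> N" "\<forall>q\<in>As n. \<not> Dm p q < e" using e(2) by blast
        obtain q where "q \<in> As n" "Dm y q < e/2" using N n(1) by blast
        moreover have "Dm p q \<le> Dm p y + Dm y q" by (rule D_tri)
        moreover have "Dm p y < e/2" using y by (simp add: M.mball_def)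
        ultimately show False using n(2) by force
      qed
      then show "y \<in> UNIV - A" by simp
    qed
    then show "\<exists>r>0. M.mball p r \<subseteq> UNIV - A" using e(1) by (meson half_gt_zero)
  qed simp
  then have "closedin M.mtopology A" by (simp add: closedin_def)
  then have "A \<in> Pf \<rho>" using neA by (simp add: Pf_def closed_iff)
  moreover have "H_converges \<rho> As A"
    unfolding Hconv_iff[OF ne neA]
  proof (intro allI impI)
    fix e :: real assume "e > 0"
    obtain N1 where N1: "\<forall>n\<ge>N1. \<forall>x\<in>As n. \<exists>p\<in>A. Dm x p < e" using part_i \<open>e>0\<close> by blast
    obtain N2 where N2: "\<forall>n\<ge>N2. \<forall>p\<in>A. \<exists>q\<in>As n. Dm p q < e" using part_ii \<open>e>0\<close> by blast
    have "Hd (As n) A e" if "n \<ge> max N1 N2" for n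
      using N1 N2 that unfolding Hd_def by auto
    then show "\<exists>N. \<forall>n\<ge>N. Hd (As n) A e" by blast
  qed
  ultimately show ?thesis by blast
qed

end

theorem theorem4p5:
  fixes \<rho> :: "'a \<Rightarrow> 'a \<Rightarrow> real \<Rightarrow> real"
    and \<tau> :: "(real \<Rightarrow> real) \<Rightarrow> (real \<Rightarrow> real) \<Rightarrow> (real \<Rightarrow> real)"
  assumes "pm_space \<rho> \<tau>"
    and "tf_sup_continuous \<tau>"
    and "condition_W \<tau>"
  shows "H_closed_in_Pf \<rho> (Pfb \<rho>) \<and> H_closed_in_Pf \<rho> (Pftb \<rho>) \<and>
         (pm_complete \<rho> \<longrightarrow> H_complete \<rho> (Pfb \<rho>) \<and> H_complete \<rho> (Pk \<rho>))"
proof -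
  interpret pms \<rho> \<tau> using assms(1,3) by unfold_locales
  have c1: "H_closed_in_Pf \<rho> (Pfb \<rho>)" unfolding H_closed_in_Pf_def
    using bounded_closed by blast
  have c2: "H_closed_in_Pf \<rho> (Pftb \<rho>)" unfolding H_closed_in_Pf_def
    using tb_closed by blast
  have c3: "H_complete \<rho> (Pfb \<rho>) \<and> H_complete \<rho> (Pk \<rho>)" if comp: "pm_complete \<rho>"
  proof
    show "H_complete \<rho> (Pfb \<rho>)" unfolding H_complete_def
    proof (intro allI impI)
      fix As assume h: "(\<forall>n. As n \<in> Pfb \<rho>) \<and> H_cauchy \<rho> As"
      then have "\<And>n. As n \<in> Pf \<rho>" by (simp add: Pfb_def Pf_def)
      then obtain A where A: "A \<in> Pf \<rho>" "H_converges \<rho> As A"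
        using complete_Pf[OF comp] h by blast
      then have "A \<in> Pfb \<rho>" using bounded_closed h by blast
      then show "\<exists>A\<in>Pfb \<rho>. H_converges \<rho> As A" using A by blast
    qed
    show "H_complete \<rho> (Pk \<rho>)" unfolding H_complete_def
    proof (intro allI impI)
      fix As assume h: "(\<forall>n. As n \<in> Pk \<rho>) \<and> H_cauchy \<rho> As"
      have cpt: "compactin M.mtopology (As n)" for n using h compact_iff by (simp add: Pk_def)
      have ne: "As n \<noteq> {}" for n using h by (simp add: Pk_def)
      have cl: "pm_closed \<rho> (As n)" for n
        unfolding closed_iff by (rule compactin_imp_closedin[OF M.Hausdorff_space_mtopology cpt])
      have tb: "pm_totally_bounded \<rho> (As n)" for n
        by (rule tb_imp[OF M.compactin_imp_mtotally_bounded[OF cpt]])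
      have AsPf: "\<And>n. As n \<in> Pf \<rho>" using ne cl by (simp add: Pf_def)
      have AsPftb: "\<And>n. As n \<in> Pftb \<rho>" using ne cl tb by (simp add: Pftb_def)
      obtain A where A: "A \<in> Pf \<rho>" "H_converges \<rho> As A"
        using complete_Pf[OF comp, of As] AsPf h by blast
      then have "A \<in> Pftb \<rho>" using tb_closed[of As A] AsPftb by blast
      then have tbA: "M.mtotally_bounded A" using tb_imp2 by (simp add: Pftb_def)
      have clA: "closedin M.mtopology A" using A(1) by (simp add: Pf_def closed_iff)
      have "compactin M.mtopology (M.mtopology closure_of A)"
        using M.mtotally_bounded_eq_compact_closure_of[OF complete_imp[OF comp]] tbA by blast
      then have "compactin M.mtopology A" using clA closure_of_eq by metis
      then have "A \<in> Pk \<rho>" using A(1) compact_iff by (simp add: Pk_def Pf_def)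
      then show "\<exists>A\<in>Pk \<rho>. H_converges \<rho> As A" using A by blast
    qed
  qed
  show ?thesis using c1 c2 c3 by blast
qed

end
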